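(* Let $H$ be a Heyting algebra, $n\ge1$, and let $f_1,\dots,f_n:H\to H$ be monotone polynomials each having a least fixed point $\mu_x.f_i(x)$. Then $x\mapsto\bigwedge_{i=1}^n f_i(x)$ has a least fixed point and $\mu_x.\bigwedge_{i=1}^n f_i(x)=\bigwedge_{i=1}^n\mu_x.f_i(x)$.
   Context: A function $f:H\to H$ is a polynomial if there exist an IPC formula $\phi$, a variable $x$ and a valuation $v$ in $H$ of the variables of $\phi$ other than $x$ such that $f(h)=[\![\phi]\!]_{(v,h/x)}$ for every $h\in H$. Least fixed points are least prefixed points. *)

theory Defs
  imports Main
begin

class heyting_algebra = bounded_lattice +
  fixes himp :: "'a \<Rightarrow> 'a \<Rightarrow> 'a"
  assumes inf_le_himp_iff: "inf x y \<le> z \<longleftrightarrow> x \<le> himp y z"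

datatype ipc_fm =
    PVar nat
  | FBot
  | FTop
  | FAnd ipc_fm ipc_fm
  | FOr ipc_fm ipc_fm
  | FImp ipc_fm ipc_fm

primrec eval_fm :: "(nat \<Rightarrow> 'a::heyting_algebra) \<Rightarrow> ipc_fm \<Rightarrow> 'a" where
  "eval_fm v (PVar p) = v p"
| "eval_fm v FBot = bot"
| "eval_fm v FTop = top"
| "eval_fm v (FAnd a b) = inf (eval_fm v a) (eval_fm v b)"
| "eval_fm v (FOr a b) = sup (eval_fm v a) (eval_fm v b)"
| "eval_fm v (FImp a b) = himp (eval_fm v a) (eval_fm v b)"

text \<open>A function is a polynomial if it is induced by a formula, a distinguished
  variable x and a valuation of the remaining variables (the value of the valuation
  at x is irrelevant, being overwritten).\<close>
definition polynomial :: "('a::heyting_algebra \<Rightarrow> 'a) \<Rightarrow> bool" where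
  "polynomial f \<longleftrightarrow> (\<exists>\<phi> x v. \<forall>h. f h = eval_fm (v(x := h)) \<phi>)"

text \<open>Least fixed points are least prefixed points.\<close>
definition is_lfp :: "('a::order \<Rightarrow> 'a) \<Rightarrow> 'a \<Rightarrow> bool" where
  "is_lfp f m \<longleftrightarrow> f m \<le> m \<and> (\<forall>y. f y \<le> y \<longrightarrow> m \<le> y)"

end

theory Submission
  imports Defs
begin

lemma h_mp: "inf (himp s t) s \<le> (t::'a::heyting_algebra)"
  using inf_le_himp_iff by blast

lemma h_mp2: "inf s (himp s t) \<le> (t::'a::heyting_algebra)"
  using h_mp[of s t] by (simp add: inf_commute)

lemma h_distrib: "inf (a::'a::heyting_algebra) (sup s t) \<le> sup (inf a s) (inf a t)"
proof -
  have "inf s a \<le> sup (inf a s) (inf a t)" by (simp add: inf_commute)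
  then have 1: "s \<le> himp a (sup (inf a s) (inf a t))" using inf_le_himp_iff by blast
  have "inf t a \<le> sup (inf a s) (inf a t)" by (simp add: inf_commute)
  then have 2: "t \<le> himp a (sup (inf a s) (inf a t))" using inf_le_himp_iff by blast
  from 1 2 have "sup s t \<le> himp a (sup (inf a s) (inf a t))" by simp
  then have "inf (sup s t) a \<le> sup (inf a s) (inf a t)" using inf_le_himp_iff by blast
  then show ?thesis by (simp add: inf_commute)
qed

lemma h_distrib_eq: "inf (a::'a::heyting_algebra) (sup s t) = sup (inf a s) (inf a t)"
  by (rule antisym[OF h_distrib]) (simp add: le_infI2)

lemma compat_fm:
  fixes a :: "'a::heyting_algebra"
  assumes "inf a x = inf a x'"
  shows "inf a (eval_fm (v(p:=x)) \<phi>) = inf a (eval_fm (v(p:=x')) \<phi>)"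
proof (induction \<phi>)
  case (PVar q) then show ?case using assms by simp
next
  case FBot then show ?case by simp
next
  case FTop then show ?case by simp
next
  case (FAnd \<phi>1 \<phi>2)
  have d: "inf a (inf s t) = inf (inf a s) (inf a t)" for s t :: 'a by (simp add: inf_aci)
  show ?case using FAnd by (simp only: eval_fm.simps d)
next
  case (FOr \<phi>1 \<phi>2)
  then show ?case by (simp add: h_distrib_eq)
next
  case (FImp \<phi>1 \<phi>2)
  have gen: "inf a (himp s t) \<le> himp s' t'"
    if e1: "inf a s = inf a s'" and e2: "inf a t = inf a t'" for s t s' t' :: 'a
  proof -
    have "inf (inf a (himp s t)) s' \<le> t'"
    proof -
      have "inf (inf a (himp s t)) s' = inf (himp s t) (inf a s')" by (simp add: inf_aci)
      also have "\<dots> = inf (himp s t) (inf a s)" using e1 by simp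
      also have "\<dots> \<le> inf a t"
      proof (rule inf.boundedI)
        show "inf (himp s t) (inf a s) \<le> a" by (simp add: le_infI2)
        have "inf (himp s t) (inf a s) \<le> inf (himp s t) s" by (simp add: inf.coboundedI2)
        then show "inf (himp s t) (inf a s) \<le> t" using h_mp[of s t] by (rule order_trans)
      qed
      also have "\<dots> = inf a t'" using e2 by simp
      also have "\<dots> \<le> t'" by simp
      finally show ?thesis .
    qed
    then show ?thesis using inf_le_himp_iff by blast
  qed
  let ?s = "eval_fm (v(p:=x)) \<phi>1" and ?t = "eval_fm (v(p:=x)) \<phi>2"
  let ?s' = "eval_fm (v(p:=x')) \<phi>1" and ?t' = "eval_fm (v(p:=x')) \<phi>2"
  have e1: "inf a ?s = inf a ?s'" by (rule FImp.IH(1))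
  have e2: "inf a ?t = inf a ?t'" by (rule FImp.IH(2))
  have "inf a (himp ?s ?t) \<le> inf a (himp ?s' ?t')"
    using gen[OF e1 e2] by simp
  moreover have "inf a (himp ?s' ?t') \<le> inf a (himp ?s ?t)"
    using gen[OF e1[symmetric] e2[symmetric]] by simp
  ultimately have "inf a (himp ?s ?t) = inf a (himp ?s' ?t')" by (rule antisym)
  then show ?case by (simp only: eval_fm.simps)
qed

definition compat :: "('a::heyting_algebra \<Rightarrow> 'a) \<Rightarrow> bool" where
  "compat f \<longleftrightarrow> (\<forall>a x x'. inf a x = inf a x' \<longrightarrow> inf a (f x) = inf a (f x'))"

lemma poly_compat: "polynomial f \<Longrightarrow> compat f"
  unfolding polynomial_def compat_def using compat_fm by metis

lemma lemL:
  fixes c :: "'a::heyting_algebra"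
  assumes "compat f" "is_lfp f m" "inf c (f y) \<le> y"
  shows "inf c m \<le> y"
proof -
  let ?w = "himp c y"
  have cw: "inf c ?w = inf c y"
  proof (rule antisym)
    show "inf c ?w \<le> inf c y" using h_mp2[of c y] by simp
    show "inf c y \<le> inf c ?w"
      by (metis inf.cobounded1 inf_commute inf_le_himp_iff le_inf_iff order_refl)
  qed
  have "inf c (f ?w) = inf c (f y)" using assms(1) cw unfolding compat_def by blast
  then have "inf (f ?w) c \<le> y" using assms(3) by (simp add: inf_commute)
  then have "f ?w \<le> ?w" using inf_le_himp_iff by blast
  then have "m \<le> ?w" using assms(2) unfolding is_lfp_def by blast
  then have "inf c m \<le> inf c ?w" by (simp add: le_infI2)
  also have "\<dots> \<le> y" using cw by simp
  finally show ?thesis .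
qed

definition bigi :: "(nat \<Rightarrow> 'a::bounded_lattice) \<Rightarrow> nat list \<Rightarrow> 'a" where
  "bigi g xs = foldr (\<lambda>i r. inf (g i) r) xs top"

lemma bigi_le: "(x \<le> bigi g xs) \<longleftrightarrow> (\<forall>i\<in>set xs. x \<le> g i)"
  by (induction xs) (auto simp: bigi_def)

lemma bigi_append: "bigi g (xs @ ys) = inf (bigi g xs) (bigi g ys)"
  by (induction xs) (auto simp: bigi_def inf_assoc)

lemma bigi_Cons: "bigi g (x # ys) = inf (g x) (bigi g ys)"
  by (simp add: bigi_def)

theorem mainTheorem7:
  fixes f :: "nat \<Rightarrow> 'a::heyting_algebra \<Rightarrow> 'a" and mu :: "nat \<Rightarrow> 'a" and n :: nat
  assumes "n \<ge> 1"
    and "\<forall>i\<in>{1..n}. mono (f i) \<and> polynomial (f i)"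
    and "\<forall>i\<in>{1..n}. is_lfp (f i) (mu i)"
  shows "is_lfp (\<lambda>x. Inf_fin ((\<lambda>i. f i x) ` {1..n})) (Inf_fin (mu ` {1..n}))"
proof -
  have ne: "{1..n} \<noteq> {}" using assms(1) by simp
  let ?m = "Inf_fin (mu ` {1..n})"
  have pre: "Inf_fin ((\<lambda>i. f i ?m) ` {1..n}) \<le> ?m"
  proof -
    have "Inf_fin ((\<lambda>i. f i ?m) ` {1..n}) \<le> mu j" if j: "j \<in> {1..n}" for j
    proof -
      have "Inf_fin ((\<lambda>i. f i ?m) ` {1..n}) \<le> f j ?m"
        using j by (intro Inf_fin.coboundedI) auto
      also have "\<dots> \<le> f j (mu j)"
        using assms(2) j by (meson Inf_fin.coboundedI finite_atLeastAtMost finite_imageI imageI monoD)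
      also have "\<dots> \<le> mu j" using assms(3) j unfolding is_lfp_def by blast
      finally show ?thesis .
    qed
    then show ?thesis using ne by (simp add: Inf_fin.bounded_iff)
  qed
  have least: "?m \<le> y" if hy: "Inf_fin ((\<lambda>i. f i y) ` {1..n}) \<le> y" for y
  proof -
    have claim: "k \<le> n \<Longrightarrow> inf (bigi mu [1..<k+1]) (bigi (\<lambda>i. f i y) [k+1..<n+1]) \<le> y" for k
    proof (induction k)
      case 0
      have "inf (bigi mu [1..<0+1]) (bigi (\<lambda>i. f i y) [0+1..<n+1])
            \<le> Inf_fin ((\<lambda>i. f i y) ` {1..n})"
      proof -
        have "bigi (\<lambda>i. f i y) [1..<n+1] \<le> f x y" if "x \<in> {1..n}" for x
        proof -
          have "bigi (\<lambda>i. f i y) [1..<n+1] \<le> bigi (\<lambda>i. f i y) [1..<n+1]" by (rule order_refl)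
          then have "\<forall>i\<in>set [1..<n+1]. bigi (\<lambda>i. f i y) [1..<n+1] \<le> f i y" by (simp only: bigi_le)
          moreover have "x \<in> set [1..<n+1]" using that by auto
          ultimately show ?thesis by blast
        qed
        then show ?thesis using ne by (auto simp: Inf_fin.bounded_iff intro: le_infI2)
      qed
      then show ?case using hy by simp
    next
      case (Suc k)
      let ?A = "bigi mu [1..<k+1]" and ?B = "bigi (\<lambda>i. f i y) [k+2..<n+1]"
      have l1: "[1..<Suc k+1] = [1..<k+1] @ [k+1]" by simp
      have l2: "[k+1..<n+1] = (k+1) # [k+2..<n+1]" using Suc.prems by (simp add: upt_conv_Cons)
      have ih: "inf (inf ?A ?B) (f (k+1) y) \<le> y"
        using Suc l2 by (simp add: bigi_Cons inf_aci)
      have kin: "k+1 \<in> {1..n}" using Suc.prems by simp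
      have "inf (inf ?A ?B) (mu (k+1)) \<le> y"
      proof (rule lemL[where f="f (k+1)" and y=y])
        show "compat (f (k+1))" using assms(2) kin poly_compat by blast
        show "is_lfp (f (k+1)) (mu (k+1))" using assms(3) kin by blast
        show "inf (inf ?A ?B) (f (k+1) y) \<le> y" by (rule ih)
      qed
      moreover have "inf (bigi mu [1..<Suc k+1]) (bigi (\<lambda>i. f i y) [Suc k+1..<n+1])
          = inf (inf ?A ?B) (mu (k+1))"
      proof -
        have s1: "bigi mu [1..<Suc k+1] = inf ?A (inf (mu (k+1)) top)"
          unfolding l1 bigi_append by (simp only: bigi_Cons) (simp add: bigi_def)
        have s2: "Suc k + 1 = k + 2" by simp
        show ?thesis unfolding s1 by (simp only: s2 inf_top_right inf_top_left inf_aci)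
      qed
      ultimately show ?case by simp
    qed
    have "?m \<le> bigi mu [1..<n+1]"
      by (auto simp: bigi_le intro!: Inf_fin.coboundedI)
    then have "?m \<le> inf (bigi mu [1..<n+1]) (bigi (\<lambda>i. f i y) [n+1..<n+1])"
      by (simp add: bigi_def)
    also have "\<dots> \<le> y" by (rule claim) simp
    finally show ?thesis .
  qed
  show ?thesis unfolding is_lfp_def using pre least by blast
qed

end
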